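(* Let $H:\mathbb{R}^{2m}\to\mathbb{R}$ be smooth and let $\bar\nabla H$ be any discrete gradient of $H$. Let $$S=\begin{pmatrix}0&1\\-1&0\end{pmatrix}$$ (with $m\times m$ blocks). Let $\theta$ be a real $2m\times 2m$ matrix with $\theta^T=S^{-1}\theta S$, and let $f$ be an analytic function whose power series converges at $\theta$. Then the scheme $$y_{n+1}-y_n=f(\theta)\,S\,\bar\nabla H(y_n,y_{n+1})$$ preserves the energy integral exactly: $H(y_{n+1})=H(y_n)$.
   Context: Points are written $y=(x,p)\in\mathbb{R}^{2m}$, $y_n=(x_n,p_n)$. A discrete gradient of $H$ is an $\mathbb{R}^{2m}$-valued function $\bar\nabla H(y_n,y_{n+1})$ with components $\Delta H/\Delta y^k$ such that: - $\sum_k\frac{\Delta H}{\Delta y^k}(y^k_{n+1}-y^k_n)=H(y_{n+1})-H(y_n)$; - $\bar\nabla H(y,y)=(H_x,H_p)$. *)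

theory Defs
  imports "HOL-Analysis.Analysis"
begin

text \<open>Points of R^{2m} are vectors indexed by the sum type 'm + 'm:
  components Inl i are the x-coordinates, Inr i the p-coordinates.\<close>

fun Ck :: "nat \<Rightarrow> ('a::euclidean_space \<Rightarrow> real) \<Rightarrow> bool" where
  "Ck 0 f = continuous_on UNIV f"
| "Ck (Suc k) f = ((\<forall>y. f differentiable (at y)) \<and> continuous_on UNIV f \<and>
      (\<forall>v. Ck k (\<lambda>y. frechet_derivative f (at y) v)))"

definition smooth_fun :: "('a::euclidean_space \<Rightarrow> real) \<Rightarrow> bool" where
  "smooth_fun f = (\<forall>k. Ck k f)"

definition discrete_gradient ::
  "(real^'n \<Rightarrow> real) \<Rightarrow> (real^'n \<Rightarrow> real^'n \<Rightarrow> real^'n) \<Rightarrow> bool" where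
  "discrete_gradient H DG \<longleftrightarrow>
     (\<forall>y y'. (\<Sum>k\<in>UNIV. DG y y' $ k * (y' $ k - y $ k)) = H y' - H y) \<and>
     (\<forall>y. (H has_derivative (\<lambda>h. DG y y \<bullet> h)) (at y))"

text \<open>The symplectic matrix S = [[0, I], [-I, 0]] with m x m blocks.\<close>
definition S_mat :: "real^('m::finite + 'm)^('m + 'm)" where
  "S_mat = (\<chi> i j. case (i, j) of
      (Inl a, Inr b) \<Rightarrow> (if a = b then 1 else 0)
    | (Inr a, Inl b) \<Rightarrow> (if a = b then -1 else 0)
    | _ \<Rightarrow> 0)"

fun mat_pow :: "real^'n^'n \<Rightarrow> nat \<Rightarrow> real^'n^'n" where
  "mat_pow A 0 = mat 1"
| "mat_pow A (Suc k) = A ** mat_pow A k"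

definition mat_series :: "(nat \<Rightarrow> real) \<Rightarrow> real^'n^'n \<Rightarrow> real^'n^'n" where
  "mat_series a A = (\<Sum>k. a k *\<^sub>R mat_pow A k)"

end

theory Submission
  imports Defs
begin
fun sw :: "'m + 'm \<Rightarrow> 'm + 'm" where "sw (Inl a) = Inr a" | "sw (Inr a) = Inl a"
fun sg :: "'m + 'm \<Rightarrow> real" where "sg (Inl a) = 1" | "sg (Inr a) = -1"

lemma S_entry: "(S_mat :: real^('m::finite+'m)^('m+'m)) $ i $ j = (if j = sw i then sg i else 0)"
  unfolding S_mat_def by (cases i; cases j) auto

lemma T_entry: "transpose (S_mat :: real^('m::finite+'m)^('m+'m)) $ i $ j = (if j = sw i then - sg i else 0)"
  unfolding transpose_def S_mat_def by (cases i; cases j) auto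

lemma sum_single: fixes i :: "'m::finite + 'm" shows "(\<Sum>k\<in>UNIV. (if k = sw i then c else 0) * (f k :: real)) = c * f (sw i)"
proof -
  have "(\<Sum>k\<in>UNIV. (if k = sw i then c else 0) * (f k :: real)) = (\<Sum>k\<in>UNIV. if k = sw i then c * f k else 0)"
    by (rule sum.cong) auto
  then show ?thesis by (subst (asm) sum.delta) auto
qed

lemma swsw: "sw (sw i) = i" by (cases i) auto
lemma sgsw: "sg (sw i) = - sg i" by (cases i) auto
lemma sgsq: "sg i * sg i = 1" by (cases i) auto

lemma TS: "transpose S_mat ** (S_mat :: real^('m::finite+'m)^('m+'m)) = mat 1"
  by (simp add: vec_eq_iff matrix_matrix_mult_def T_entry S_entry sum_single mat_def swsw sgsw sgsq)
lemma ST: "S_mat ** transpose (S_mat :: real^('m::finite+'m)^('m+'m)) = mat 1"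
  by (simp add: vec_eq_iff matrix_matrix_mult_def T_entry S_entry sum_single mat_def swsw sgsw sgsq)
lemma TT: "transpose S_mat ** transpose (S_mat :: real^('m::finite+'m)^('m+'m)) = mat (-1)"
  by (simp add: vec_eq_iff matrix_matrix_mult_def T_entry S_entry sum_single mat_def swsw sgsw sgsq)

lemma inv_unique: "(C::real^'n::finite^'n) ** A = mat 1 \<Longrightarrow> A ** B = mat 1 \<Longrightarrow> C = B"
  by (metis matrix_mul_assoc matrix_mul_lid matrix_mul_rid)

lemma Sinv: "matrix_inv (S_mat :: real^('m::finite+'m)^('m+'m)) = transpose S_mat"
proof -
  let ?P = "\<lambda>A'. S_mat ** A' = mat 1 \<and> A' ** (S_mat :: real^('m::finite+'m)^('m+'m)) = mat 1"
  have "?P (transpose S_mat)" using TS ST by simp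
  hence p: "?P (matrix_inv S_mat)" unfolding matrix_inv_def by (rule someI)
  show ?thesis by (rule inv_unique[OF conjunct2[OF p] ST])
qed

lemma pow_Suc': "mat_pow A (Suc k) = mat_pow A k ** A"
  by (induction k) (simp_all add: matrix_mul_assoc)

lemma mat_neg: "mat (-1) ** (A :: real^'n^'n) = - A"
proof -
  have "\<And>i j. (\<Sum>k\<in>UNIV. (if i = k then -1 else 0) * A $ k $ j) = (\<Sum>k\<in>UNIV. if i = k then - A $ k $ j else 0)"
    by (rule sum.cong) auto
  then show ?thesis by (simp add: vec_eq_iff matrix_matrix_mult_def mat_def)
qed

lemma trans_pow:
  assumes "transpose \<theta> = transpose S_mat ** \<theta> ** (S_mat :: real^('m::finite+'m)^('m+'m))"
  shows "transpose (mat_pow \<theta> k) = transpose S_mat ** mat_pow \<theta> k ** S_mat"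
proof (induction k)
  case 0 then show ?case using TS by (metis transpose_mat mat_pow.simps(1) matrix_mul_rid)
next
  case (Suc k)
  have "transpose (mat_pow \<theta> (Suc k)) = transpose (mat_pow \<theta> k) ** transpose \<theta>"
    by (simp add: matrix_transpose_mul)
  also have "\<dots> = transpose S_mat ** mat_pow \<theta> k ** (S_mat ** transpose S_mat) ** \<theta> ** S_mat"
    by (simp add: assms Suc matrix_mul_assoc)
  also have "\<dots> = transpose S_mat ** mat_pow \<theta> (Suc k) ** S_mat"
    by (simp del: mat_pow.simps add: ST pow_Suc' matrix_mul_assoc)
  finally show ?case .
qed

lemma antisym_pow:
  assumes "transpose \<theta> = transpose S_mat ** \<theta> ** (S_mat :: real^('m::finite+'m)^('m+'m))"
  shows "transpose (mat_pow \<theta> k ** S_mat) = - (mat_pow \<theta> k ** S_mat)"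
proof -
  have "transpose (mat_pow \<theta> k ** S_mat) = transpose S_mat ** transpose (mat_pow \<theta> k)"
    by (simp add: matrix_transpose_mul)
  also have "\<dots> = (transpose S_mat ** transpose S_mat) ** (mat_pow \<theta> k ** S_mat)"
    by (simp add: trans_pow[OF assms] matrix_mul_assoc)
  also have "\<dots> = - (mat_pow \<theta> k ** S_mat)" by (simp add: TT mat_neg)
  finally show ?thesis .
qed

lemma quad_zero:
  fixes B :: "real^'n^'n"
  assumes "transpose B = - B"
  shows "g \<bullet> (B *v g) = 0"
proof -
  have "g \<bullet> (B *v g) = (g v* B) \<bullet> g" by (simp add: dot_lmul_matrix)
  also have "g v* B = transpose B *v g" by simp
  also have "\<dots> = - (B *v g)" using assms by (simp add: matrix_vector_mult_def vec_eq_iff sum_negf)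
  finally show ?thesis by (simp add: inner_commute)
qed

lemma bl: "bounded_linear (\<lambda>M::real^'n::finite^'n. g \<bullet> ((M ** S) *v g))"
proof -
  have "linear (\<lambda>M::real^'n^'n. g \<bullet> ((M ** S) *v g))"
    by (rule linearI) (simp_all add: matrix_vector_mul_assoc[symmetric] matrix_vector_mult_add_rdistrib inner_add_right
        scaleR_matrix_vector_assoc[symmetric])
  then show ?thesis by (simp add: linear_conv_bounded_linear)
qed

lemma term_zero:
  assumes "transpose \<theta> = transpose S_mat ** \<theta> ** (S_mat :: real^('m::finite+'m)^('m+'m))"
  shows "g \<bullet> (((c *\<^sub>R mat_pow \<theta> k) ** S_mat) *v g) = 0"
proof -
  have "g \<bullet> ((mat_pow \<theta> k ** S_mat) *v g) = 0" by (rule quad_zero[OF antisym_pow[OF assms]])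
  moreover have "(c *\<^sub>R mat_pow \<theta> k) ** S_mat = c *\<^sub>R (mat_pow \<theta> k ** S_mat)"
    by (simp add: scalar_matrix_assoc)
  ultimately show ?thesis by (simp add: scaleR_matrix_vector_assoc[symmetric])
qed

theorem corollary6p7:
  fixes H :: "real^('m::finite + 'm) \<Rightarrow> real"
    and DG :: "real^('m + 'm) \<Rightarrow> real^('m + 'm) \<Rightarrow> real^('m + 'm)"
    and \<theta> :: "real^('m + 'm)^('m + 'm)"
    and a :: "nat \<Rightarrow> real"
    and y :: "nat \<Rightarrow> real^('m + 'm)"
  assumes "smooth_fun H"
    and "discrete_gradient H DG"
    and "transpose \<theta> = matrix_inv S_mat ** \<theta> ** S_mat"
    and "summable (\<lambda>k. a k *\<^sub>R mat_pow \<theta> k)"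
    and "\<forall>n. y (Suc n) - y n = (mat_series a \<theta> ** S_mat) *v DG (y n) (y (Suc n))"
  shows "\<forall>n. H (y (Suc n)) = H (y n)"
proof
  fix n
  define g where "g = DG (y n) (y (Suc n))"
  have th: "transpose \<theta> = transpose S_mat ** \<theta> ** S_mat" using assms(3) by (simp add: Sinv)
  have "H (y (Suc n)) - H (y n) = g \<bullet> (y (Suc n) - y n)"
    using assms(2) unfolding discrete_gradient_def g_def inner_vec_def by simp
  also have "\<dots> = g \<bullet> ((mat_series a \<theta> ** S_mat) *v g)" using assms(5) g_def by simp
  also have "\<dots> = (\<Sum>k. g \<bullet> (((a k *\<^sub>R mat_pow \<theta> k) ** S_mat) *v g))"
    unfolding mat_series_def by (rule bounded_linear.suminf[OF bl assms(4)])
  also have "\<dots> = 0" by (simp add: term_zero[OF th])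
  finally show "H (y (Suc n)) = H (y n)" by simp
qed

end
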